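(* Let $\theta\geq0$ and $\lambda\in\mathbb{R}$. Let $W=\sum_{a\in\mathbb{Z}}e^{\theta|a-\lambda|}P_a$ (self-adjoint on its natural domain). Then $W^{-1}VW$, defined on finitely supported vectors in the Stark basis, has a bounded closure, and $\|\overline{W^{-1}VW}\|\le C(\theta)$ for a constant $C(\theta)<\infty$ depending on $\theta,N,g,h,v$ but not on $\lambda$.
   Context: $g,h\in\mathbb{R}$, $h\ne0$. $(e_j)$ canonical basis of $\ell^2(\mathbb{Z})$, $H_0=g\Delta-2hX$ with $Xe_j=je_j$, $\Delta e_j=-(e_{j-1}+e_{j+1})$. Stark basis: $|m\rangle\in\ell^2(\mathbb{Z})$, $m\in\mathbb{Z}$, with $\langle e_j|m\rangle=\mathcal{J}_{m-j}(g/h)$ (Bessel functions); it is an orthonormal basis with $H_0|m\rangle=-2hm|m\rangle$. For $\underline m\in\mathbb{Z}^N$, $|\underline m\rangle=|m_1\rangle\otimes\cdots\otimes|m_N\rangle$. $V=\sum_{1\le i<j\le N}V_{ij}$ with $V_{ij}$ multiplication by $v(x_i-x_j)$ in the position basis, $v:\mathbb{Z}\to\mathbb{R}$ bounded with $v(n)\to0$ at $\pm\infty$. $P_a$ is the orthogonal projection onto $\overline{\operatorname{span}}\{|\underline m\rangle:\sum_im_i=a\}$. *)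

theory Defs
  imports "HOL-Analysis.Analysis"
begin

definition besselJ_nat :: "nat \<Rightarrow> real \<Rightarrow> real" where
  "besselJ_nat n x = (\<Sum>k. (-1) ^ k / (fact k * fact (k + n)) * (x / 2) ^ (2 * k + n))"

definition besselJ :: "int \<Rightarrow> real \<Rightarrow> real" where
  "besselJ n x = (if 0 \<le> n then besselJ_nat (nat n) x
                  else (-1) ^ nat (- n) * besselJ_nat (nat (- n)) x)"

text \<open>Configurations of N particles on Z are functions 'n => int, with 'n a finite
  (linearly ordered) index type of cardinality N.  Vectors of l^2(Z^N) are
  functions ('n => int) => complex.\<close>

definition l2 :: "(('n::finite \<Rightarrow> int) \<Rightarrow> complex) \<Rightarrow> bool" where
  "l2 \<psi> \<longleftrightarrow> (\<lambda>x. (cmod (\<psi> x))\<^sup>2) summable_on UNIV"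

definition l2norm :: "(('n::finite \<Rightarrow> int) \<Rightarrow> complex) \<Rightarrow> real" where
  "l2norm \<psi> = sqrt (\<Sum>\<^sub>\<infinity>x. (cmod (\<psi> x))\<^sup>2)"

text \<open>Stark basis vector |m> (m in Z^N) in the position basis:
  <e_x | m> = prod_i J_{m_i - x_i}(g/h).\<close>
definition stark :: "real \<Rightarrow> real \<Rightarrow> ('n::finite \<Rightarrow> int) \<Rightarrow> ('n \<Rightarrow> int) \<Rightarrow> complex" where
  "stark g h m x = complex_of_real (\<Prod>i\<in>UNIV. besselJ (m i - x i) (g / h))"

definition stark_coeff :: "real \<Rightarrow> real \<Rightarrow> ('n::finite \<Rightarrow> int) \<Rightarrow> (('n \<Rightarrow> int) \<Rightarrow> complex) \<Rightarrow> complex" where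
  "stark_coeff g h m \<phi> = (\<Sum>\<^sub>\<infinity>x. cnj (stark g h m x) * \<phi> x)"

definition msum :: "('n::finite \<Rightarrow> int) \<Rightarrow> int" where
  "msum m = (\<Sum>i\<in>UNIV. m i)"

text \<open>P_a: orthogonal projection onto the closed span of {|m> : sum_i m_i = a}.\<close>
definition Pa :: "real \<Rightarrow> real \<Rightarrow> int \<Rightarrow> (('n::finite \<Rightarrow> int) \<Rightarrow> complex) \<Rightarrow> ('n \<Rightarrow> int) \<Rightarrow> complex" where
  "Pa g h a \<phi> x = (\<Sum>\<^sub>\<infinity>m\<in>{m. msum m = a}. stark_coeff g h m \<phi> * stark g h m x)"

text \<open>The operator sum_a w(a) P_a (applied pointwise).  W = sum_a e^{theta|a-lambda|} P_a,
  W^{-1} = sum_a e^{-theta|a-lambda|} P_a.\<close>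
definition Wop :: "real \<Rightarrow> real \<Rightarrow> (int \<Rightarrow> real) \<Rightarrow> (('n::finite \<Rightarrow> int) \<Rightarrow> complex) \<Rightarrow> ('n \<Rightarrow> int) \<Rightarrow> complex" where
  "Wop g h w \<phi> x = (\<Sum>\<^sub>\<infinity>a. complex_of_real (w a) * Pa g h a \<phi> x)"

definition Pot :: "(int \<Rightarrow> real) \<Rightarrow> ('n::{finite,linorder} \<Rightarrow> int) \<Rightarrow> real" where
  "Pot v x = (\<Sum>(i, j)\<in>{(i, j). i < j}. v (x i - x j))"

end

theory Submission
  imports Defs "HOL-Analysis.Analysis"
begin


lemma exp_sums_real: "(\<lambda>k. (y::real)^k / fact k) sums exp y"
  using exp_converges[of y] by (simp add: field_class.field_divide_inverse mult.commute[of _ "inverse _"])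

definition bb :: "real \<Rightarrow> int \<Rightarrow> real" where
  "bb z k = (\<bar>z\<bar>/2)^(nat \<bar>k\<bar>) / fact (nat \<bar>k\<bar>) * exp (z^2/4)"

lemma bb_nonneg: "bb z k \<ge> 0"
  unfolding bb_def by simp

lemma besselJ_nat_bound:
  "\<bar>besselJ_nat n x\<bar> \<le> (\<bar>x\<bar>/2)^n / fact n * exp (x^2/4)"
proof -
  define t where "t k = (-1) ^ k / (fact k * fact (k + n)) * (x / 2) ^ (2 * k + n)" for k
  define c where "c = (\<bar>x\<bar>/2)^n / fact n"
  define b where "b k = c * ((x^2/4)^k / fact k)" for k
  have c0: "c \<ge> 0" unfolding c_def by simp
  have es: "(\<lambda>k. (x^2/4)^k / fact k) sums exp (x^2/4)"
    by (rule exp_sums_real)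
  have bs: "b sums (c * exp (x^2/4))"
    unfolding b_def by (rule sums_mult[OF es])
  have tb: "\<bar>t k\<bar> \<le> b k" for k
  proof -
    have "\<bar>t k\<bar> = (\<bar>x\<bar>/2)^(2*k+n) / (fact k * fact (k+n))"
      unfolding t_def by (simp add: abs_mult power_abs abs_divide)
    also have "\<dots> \<le> (\<bar>x\<bar>/2)^(2*k+n) / (fact k * fact n)"
      by (intro divide_left_mono mult_left_mono) (auto simp: fact_mono)
    also have "\<dots> = b k"
    proof -
      have p1: "(\<bar>x\<bar>/2)^2 = x^2/4" by (simp add: power_divide)
      have p2: "(\<bar>x\<bar>/2)^(2*k+n) = ((\<bar>x\<bar>/2)^2)^k * (\<bar>x\<bar>/2)^n" by (simp add: power_add power_mult)
      show ?thesis unfolding b_def c_def p2 p1 by (simp add: mult.commute)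
    qed
    finally show ?thesis .
  qed
  have sb: "summable b" using bs by (rule sums_summable)
  have st: "summable (\<lambda>k. \<bar>t k\<bar>)"
    by (rule summable_comparison_test[OF _ sb]) (use tb in auto)
  have "\<bar>besselJ_nat n x\<bar> = \<bar>suminf t\<bar>" unfolding besselJ_nat_def t_def by simp
  also have "\<dots> \<le> (\<Sum>k. \<bar>t k\<bar>)" by (rule summable_rabs[OF st])
  also have "\<dots> \<le> suminf b" by (rule suminf_le[OF tb st sb])
  also have "\<dots> = c * exp (x^2/4)" using bs by (simp add: sums_iff)
  finally show ?thesis unfolding c_def .
qed

lemma besselJ_bound: "\<bar>besselJ k z\<bar> \<le> bb z k"
proof (cases "0 \<le> k")
  case True
  then show ?thesis using besselJ_nat_bound[of "nat k" z]
    by (simp add: besselJ_def bb_def)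
next
  case False
  then show ?thesis using besselJ_nat_bound[of "nat (-k)" z]
    by (simp add: besselJ_def bb_def abs_mult)
qed



lemma nn_finite_summable:
  fixes f :: "'a \<Rightarrow> real"
  assumes nn: "\<And>x. f x \<ge> 0" and fin: "(\<integral>\<^sup>+x. ennreal (f x) \<partial>count_space A) \<noteq> \<infinity>"
  shows "f summable_on A \<and> ennreal (infsum f A) = (\<integral>\<^sup>+x. ennreal (f x) \<partial>count_space A)"
proof -
  have int: "integrable (count_space A) f"
    by (rule integrableI_bounded) (use nn fin in \<open>auto simp: top.not_eq_extremum\<close>)
  hence as: "Infinite_Set_Sum.abs_summable_on f A" by (simp add: Infinite_Set_Sum.abs_summable_on_def)
  hence "(\<lambda>x. norm (f x)) summable_on A" using abs_summable_equivalent by blast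
  hence s: "f summable_on A" by (rule abs_summable_summable)
  have "infsum f A = infsetsum f A" using infsetsum_infsum[OF as] by simp
  moreover have "(\<integral>\<^sup>+x. ennreal (f x) \<partial>count_space A) = ennreal (infsetsum f A)"
    using nn_integral_conv_infsetsum[OF as] nn by simp
  ultimately show ?thesis using s by simp
qed

lemma nn_summable_eq:
  fixes f :: "'a \<Rightarrow> real"
  assumes nn: "\<And>x. f x \<ge> 0" and s: "f summable_on A"
  shows "ennreal (infsum f A) = (\<integral>\<^sup>+x. ennreal (f x) \<partial>count_space A)"
proof -
  have "(\<lambda>x. norm (f x)) summable_on A" using s nn by simp
  hence as: "Infinite_Set_Sum.abs_summable_on f A" using abs_summable_equivalent by blast
  have "infsum f A = infsetsum f A" using infsetsum_infsum[OF as] by simp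
  moreover have "(\<integral>\<^sup>+x. ennreal (f x) \<partial>count_space A) = ennreal (infsetsum f A)"
    using nn_integral_conv_infsetsum[OF as] nn by simp
  ultimately show ?thesis by simp
qed

lemma norm_infsum_ennreal:
  fixes f :: "'a \<Rightarrow> complex"
  shows "ennreal (norm (infsum f A)) \<le> (\<integral>\<^sup>+x. ennreal (norm (f x)) \<partial>count_space A)"
proof (cases "(\<lambda>x. norm (f x)) summable_on A")
  case True
  have "norm (infsum f A) \<le> infsum (\<lambda>x. norm (f x)) A"
    by (rule norm_infsum_bound) (use True in simp)
  hence "ennreal (norm (infsum f A)) \<le> ennreal (infsum (\<lambda>x. norm (f x)) A)"
    by (rule ennreal_leI)
  also have "\<dots> = (\<integral>\<^sup>+x. ennreal (norm (f x)) \<partial>count_space A)"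
    by (rule nn_summable_eq) (use True in auto)
  finally show ?thesis .
next
  case False
  hence "\<not> f summable_on A" using summable_on_iff_abs_summable_on_complex by blast
  hence "infsum f A = 0" by (simp add: infsum_not_exists)
  then show ?thesis by simp
qed

lemma nn_swap:
  fixes f :: "'a \<Rightarrow> 'b \<Rightarrow> ennreal"
  shows "(\<integral>\<^sup>+x. \<integral>\<^sup>+y. f x y \<partial>count_space UNIV \<partial>count_space UNIV)
       = (\<integral>\<^sup>+y. \<integral>\<^sup>+x. f x y \<partial>count_space UNIV \<partial>count_space UNIV)"
  using nn_integral_fst_count_space[of "\<lambda>(x,y). f x y"] nn_integral_snd_count_space[of "\<lambda>(x,y). f x y"]
  by simp

lemma ennreal_2ab: fixes a b :: ennreal shows "2 * a * b \<le> a^2 + b^2"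
proof (cases a rule: ennreal_cases)
  case (real r)
  then show ?thesis
  proof (cases b rule: ennreal_cases)
    case (real q)
    have "2*r*q \<le> r^2 + q^2" using sum_squares_bound[of r q] by simp
    hence "ennreal (2*r*q) \<le> ennreal (r^2 + q^2)" by (rule ennreal_leI)
    then show ?thesis using \<open>a = ennreal r\<close> real \<open>0 \<le> r\<close>
      by (simp add: ennreal_mult ennreal_power ennreal_plus)
  qed (simp add: top_power_ennreal)
qed (simp add: top_power_ennreal)

lemma nn_CS:
  fixes k v :: "'a \<Rightarrow> ennreal"
  shows "(\<integral>\<^sup>+y. k y * v y \<partial>count_space UNIV)^2
       \<le> (\<integral>\<^sup>+y. k y \<partial>count_space UNIV) * (\<integral>\<^sup>+y. k y * (v y)^2 \<partial>count_space UNIV)"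
proof -
  let ?I = "\<lambda>f. \<integral>\<^sup>+y. f y \<partial>count_space UNIV"
  have sq: "?I (\<lambda>y. k y * v y)^2 = ?I (\<lambda>y. ?I (\<lambda>y'. (k y * v y) * (k y' * v y')))"
    by (simp add: power2_eq_square nn_integral_cmult nn_integral_multc)
  have "2 * ?I (\<lambda>y. k y * v y)^2 = ?I (\<lambda>y. ?I (\<lambda>y'. k y * k y' * (2 * v y * v y')))"
    unfolding sq by (simp add: nn_integral_cmult[symmetric] mult_ac)
  also have "\<dots> \<le> ?I (\<lambda>y. ?I (\<lambda>y'. k y * k y' * ((v y)^2 + (v y')^2)))"
    by (intro nn_integral_mono mult_left_mono ennreal_2ab) auto
  also have "\<dots> = ?I (\<lambda>y. ?I (\<lambda>y'. k y * (v y)^2 * k y')) + ?I (\<lambda>y. ?I (\<lambda>y'. k y * (k y' * (v y')^2)))"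
    by (simp add: distrib_left nn_integral_add mult_ac)
  also have "\<dots> = 2 * (?I k * ?I (\<lambda>y. k y * (v y)^2))"
  proof -
    have e1: "?I (\<lambda>y. ?I (\<lambda>y'. k y * (v y)^2 * k y')) = ?I (\<lambda>y. k y * (v y)^2 * ?I k)"
      by (simp add: nn_integral_cmult)
    have e2: "?I (\<lambda>y. ?I (\<lambda>y'. k y * (k y' * (v y')^2))) = ?I (\<lambda>y. k y * ?I (\<lambda>y'. k y' * (v y')^2))"
      by (simp add: nn_integral_cmult)
    have e3: "?I (\<lambda>y. k y * (v y)^2 * ?I k) = ?I (\<lambda>y. k y * (v y)^2) * ?I k"
      by (rule nn_integral_multc) simp
    have e4: "?I (\<lambda>y. k y * ?I (\<lambda>y'. k y' * (v y')^2)) = ?I k * ?I (\<lambda>y'. k y' * (v y')^2)"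
      by (rule nn_integral_multc) simp
    show ?thesis unfolding e1 e2 e3 e4 by (simp add: mult_ac mult_2)
  qed
  finally show ?thesis
    by (simp add: ennreal_mult_le_mult_iff)
qed

lemma schur:
  fixes k :: "'a \<Rightarrow> 'b \<Rightarrow> ennreal" and u :: "'a \<Rightarrow> ennreal" and v :: "'b \<Rightarrow> ennreal"
  assumes uk: "\<And>x. u x \<le> (\<integral>\<^sup>+y. k x y * v y \<partial>count_space UNIV)"
    and A: "\<And>x. (\<integral>\<^sup>+y. k x y \<partial>count_space UNIV) \<le> A"
    and B: "\<And>y. (\<integral>\<^sup>+x. k x y \<partial>count_space UNIV) \<le> B"
  shows "(\<integral>\<^sup>+x. (u x)^2 \<partial>count_space UNIV) \<le> A * B * (\<integral>\<^sup>+y. (v y)^2 \<partial>count_space UNIV)"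
proof -
  have "(\<integral>\<^sup>+x. (u x)^2 \<partial>count_space UNIV)
     \<le> (\<integral>\<^sup>+x. A * (\<integral>\<^sup>+y. k x y * (v y)^2 \<partial>count_space UNIV) \<partial>count_space UNIV)"
  proof (intro nn_integral_mono)
    fix x
    have "(u x)^2 \<le> (\<integral>\<^sup>+y. k x y * v y \<partial>count_space UNIV)^2"
      by (intro power_mono uk) auto
    also have "\<dots> \<le> (\<integral>\<^sup>+y. k x y \<partial>count_space UNIV) * (\<integral>\<^sup>+y. k x y * (v y)^2 \<partial>count_space UNIV)"
      by (rule nn_CS)
    also have "\<dots> \<le> A * (\<integral>\<^sup>+y. k x y * (v y)^2 \<partial>count_space UNIV)"
      by (intro mult_right_mono A) auto
    finally show "(u x)^2 \<le> A * (\<integral>\<^sup>+y. k x y * (v y)^2 \<partial>count_space UNIV)" .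
  qed
  also have "\<dots> = A * (\<integral>\<^sup>+y. (\<integral>\<^sup>+x. k x y \<partial>count_space UNIV) * (v y)^2 \<partial>count_space UNIV)"
    by (simp add: nn_integral_cmult nn_swap[of "\<lambda>x y. k x y * (v y)^2"] nn_integral_multc)
  also have "\<dots> \<le> A * (\<integral>\<^sup>+y. B * (v y)^2 \<partial>count_space UNIV)"
    by (intro mult_left_mono nn_integral_mono mult_right_mono B) auto
  also have "\<dots> = A * B * (\<integral>\<^sup>+y. (v y)^2 \<partial>count_space UNIV)"
    by (simp add: nn_integral_cmult mult_ac)
  finally show ?thesis .
qed



definition gk :: "real \<Rightarrow> real \<Rightarrow> int \<Rightarrow> real" where
  "gk \<theta> z k = exp (\<theta> * \<bar>real_of_int k\<bar>) * bb z k"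

definition Gk :: "real \<Rightarrow> real \<Rightarrow> ('n::finite \<Rightarrow> int) \<Rightarrow> real" where
  "Gk \<theta> z d = (\<Prod>i\<in>UNIV. gk \<theta> z (d i))"

lemma gk_nonneg: "gk \<theta> z k \<ge> 0" unfolding gk_def using bb_nonneg by simp
lemma Gk_nonneg: "Gk \<theta> z d \<ge> 0" unfolding Gk_def using gk_nonneg by (simp add: prod_nonneg)

definition hk :: "real \<Rightarrow> real \<Rightarrow> nat \<Rightarrow> real" where
  "hk \<theta> z n = exp (z^2/4) * ((exp \<theta> * (\<bar>z\<bar>/2))^n / fact n)"

lemma hk_summable: "summable (hk \<theta> z)"
proof -
  have "(\<lambda>n. (exp \<theta> * (\<bar>z\<bar>/2))^n / fact n) sums exp (exp \<theta> * (\<bar>z\<bar>/2))"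
    by (rule exp_sums_real)
  then show ?thesis unfolding hk_def by (intro summable_mult sums_summable)
qed

lemma gk_int: "gk \<theta> z (int n) = hk \<theta> z n"
proof -
  have "exp (\<theta> * real n) = exp \<theta> ^ n" by (metis exp_of_nat_mult mult.commute)
  moreover have "(\<bar>z\<bar> * exp \<theta> / 2)^n = exp \<theta> ^ n * (\<bar>z\<bar> / 2)^n"
    by (simp add: power_mult_distrib[symmetric] mult_ac)
  ultimately show ?thesis unfolding gk_def hk_def bb_def
    by (simp add: power_mult_distrib mult_ac)
qed

lemma gk_neg: "gk \<theta> z (- int n - 1) = hk \<theta> z (Suc n)"
proof -
  have "- int n - 1 = - int (Suc n)" by simp
  moreover have "gk \<theta> z (- int m) = gk \<theta> z (int m)" for m
    unfolding gk_def bb_def by simp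
  ultimately show ?thesis using gk_int by metis
qed

lemma nn_int_split:
  fixes f :: "int \<Rightarrow> ennreal"
  shows "(\<integral>\<^sup>+k. f k \<partial>count_space UNIV) = (\<Sum>n. f (int n)) + (\<Sum>n. f (- int n - 1))"
proof -
  have "(\<integral>\<^sup>+k. f k \<partial>count_space UNIV)
      = (\<integral>\<^sup>+k. f k * indicator {0..} k + f k * indicator {..<0} k \<partial>count_space UNIV)"
    by (intro nn_integral_cong) (auto simp: indicator_def)
  also have "\<dots> = (\<integral>\<^sup>+k. f k \<partial>count_space {0..}) + (\<integral>\<^sup>+k. f k \<partial>count_space {..<0})"
    by (simp add: nn_integral_add nn_integral_count_space_indicator)
  also have "(\<integral>\<^sup>+k. f k \<partial>count_space {0..}) = (\<integral>\<^sup>+n. f (int n) \<partial>count_space UNIV)"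
  proof -
    have "bij_betw int UNIV {0::int..}"
      by (rule bij_betwI[where g=nat]) auto
    then show ?thesis by (rule nn_integral_bij_count_space[symmetric])
  qed
  also have "(\<integral>\<^sup>+k. f k \<partial>count_space {..<0}) = (\<integral>\<^sup>+n. f (- int n - 1) \<partial>count_space UNIV)"
  proof -
    have "bij_betw (\<lambda>n. - int n - 1) UNIV {..<0::int}"
      by (rule bij_betwI[where g="\<lambda>k. nat (- k - 1)"]) auto
    then show ?thesis by (rule nn_integral_bij_count_space[symmetric])
  qed
  finally show ?thesis by (simp add: nn_integral_count_space_nat)
qed

lemma gk_nn_finite: "(\<integral>\<^sup>+k. ennreal (gk \<theta> z k) \<partial>count_space UNIV) \<noteq> \<infinity>"
proof -
  have s1: "summable (\<lambda>n. hk \<theta> z (Suc n))"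
    using hk_summable summable_Suc_iff by blast
  have hn: "hk \<theta> z n \<ge> 0" for n unfolding hk_def by simp
  have "(\<integral>\<^sup>+k. ennreal (gk \<theta> z k) \<partial>count_space UNIV)
     = ennreal (\<Sum>n. hk \<theta> z n) + ennreal (\<Sum>n. hk \<theta> z (Suc n))"
    unfolding nn_int_split gk_int gk_neg
    using suminf_ennreal2[OF hn hk_summable] suminf_ennreal2[OF hn s1] by simp
  then show ?thesis by simp
qed

definition Cth :: "real \<Rightarrow> real \<Rightarrow> real" where
  "Cth \<theta> z = infsum (gk \<theta> z) UNIV"

lemma gk_summable: "gk \<theta> z summable_on UNIV"
  and gk_eq: "ennreal (Cth \<theta> z) = (\<integral>\<^sup>+k. ennreal (gk \<theta> z k) \<partial>count_space UNIV)"
  using nn_finite_summable[OF gk_nonneg gk_nn_finite] unfolding Cth_def by auto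

lemma Gk_eq: "(\<integral>\<^sup>+d. ennreal (Gk \<theta> z (d :: 'n::finite \<Rightarrow> int)) \<partial>count_space UNIV)
     = ennreal (Cth \<theta> z ^ CARD('n))"
proof -
  have ns: "(\<lambda>k. norm (gk \<theta> z k)) summable_on UNIV"
    using gk_summable gk_nonneg by simp
  have as: "Infinite_Set_Sum.abs_summable_on (gk \<theta> z) UNIV"
    using ns abs_summable_equivalent by blast
  have "Infinite_Set_Sum.abs_summable_on (\<lambda>d. \<Prod>i\<in>UNIV. gk \<theta> z (d i)) (PiE (UNIV::'n set) (\<lambda>_. UNIV))"
    by (rule abs_summable_on_prod_PiE) (use as in auto)
  hence "Infinite_Set_Sum.abs_summable_on (\<lambda>d. \<Prod>i\<in>UNIV. gk \<theta> z (d i)) (UNIV :: ('n \<Rightarrow> int) set)"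
    by (simp add: PiE_UNIV)
  hence "(\<lambda>d. norm (\<Prod>i\<in>UNIV. gk \<theta> z (d i))) summable_on (UNIV :: ('n \<Rightarrow> int) set)"
    using abs_summable_equivalent[of "\<lambda>d. \<Prod>i\<in>UNIV. gk \<theta> z (d i)" "UNIV :: ('n \<Rightarrow> int) set"] by simp
  hence sG: "(Gk \<theta> z :: ('n \<Rightarrow> int) \<Rightarrow> real) summable_on UNIV"
    unfolding Gk_def by (rule abs_summable_summable)
  have "infsum (\<lambda>d. \<Prod>i\<in>UNIV. gk \<theta> z (d i)) (PiE (UNIV::'n set) (\<lambda>_. UNIV)) = (\<Prod>i\<in>(UNIV::'n set). infsum (gk \<theta> z) UNIV)"
    by (rule infsum_prod_PiE_abs) (use ns in auto)
  hence "infsum (Gk \<theta> z :: ('n \<Rightarrow> int) \<Rightarrow> real) UNIV = Cth \<theta> z ^ CARD('n)"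
    unfolding Gk_def Cth_def by (simp add: PiE_UNIV)
  then show ?thesis using nn_summable_eq[OF Gk_nonneg sG] by simp
qed

lemma bij_sub1: "bij_betw (\<lambda>y::'n \<Rightarrow> int. (\<lambda>i. m i - y i)) UNIV UNIV"
  by (rule bij_betwI[where g="\<lambda>y i. m i - y i"]) auto
lemma bij_sub2: "bij_betw (\<lambda>m::'n \<Rightarrow> int. (\<lambda>i. m i - y i)) UNIV UNIV"
  by (rule bij_betwI[where g="\<lambda>m i. m i + y i"]) auto

lemma Gk_shift1: fixes m :: "'n::finite \<Rightarrow> int" shows "(\<integral>\<^sup>+y. ennreal (Gk \<theta> z (\<lambda>i. m i - y i)) \<partial>count_space UNIV)
     = ennreal (Cth \<theta> z ^ CARD('n))"
proof -
  have "(\<integral>\<^sup>+y. ennreal (Gk \<theta> z (\<lambda>i. m i - y i)) \<partial>count_space UNIV) = (\<integral>\<^sup>+d. ennreal (Gk \<theta> z (d::'n \<Rightarrow> int)) \<partial>count_space UNIV)"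
    using nn_integral_bij_count_space[OF bij_sub1[of m], of "\<lambda>d. ennreal (Gk \<theta> z d)"] by simp
  also have "\<dots> = ennreal (Cth \<theta> z ^ CARD('n))" by (rule Gk_eq)
  finally show ?thesis .
qed

lemma Gk_shift2: fixes y :: "'n::finite \<Rightarrow> int" shows "(\<integral>\<^sup>+m. ennreal (Gk \<theta> z (\<lambda>i. m i - y i)) \<partial>count_space UNIV)
     = ennreal (Cth \<theta> z ^ CARD('n))"
proof -
  have "(\<integral>\<^sup>+m. ennreal (Gk \<theta> z (\<lambda>i. m i - y i)) \<partial>count_space UNIV) = (\<integral>\<^sup>+d. ennreal (Gk \<theta> z (d::'n \<Rightarrow> int)) \<partial>count_space UNIV)"
    using nn_integral_bij_count_space[OF bij_sub2[of y], of "\<lambda>d. ennreal (Gk \<theta> z d)"] by simp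
  also have "\<dots> = ennreal (Cth \<theta> z ^ CARD('n))" by (rule Gk_eq)
  finally show ?thesis .
qed



lemma gk_mono: "0 \<le> \<theta> \<Longrightarrow> \<theta> \<le> \<theta>' \<Longrightarrow> gk \<theta> z k \<le> gk \<theta>' z k"
  unfolding gk_def using bb_nonneg[of z k]
  by (intro mult_right_mono) (auto intro!: mult_right_mono)

lemma Gk_mono: "0 \<le> \<theta> \<Longrightarrow> \<theta> \<le> \<theta>' \<Longrightarrow> Gk \<theta> z d \<le> Gk \<theta>' z d"
  unfolding Gk_def by (intro prod_mono) (auto simp: gk_nonneg gk_mono)

lemma stark_bound:
  assumes "0 \<le> \<theta>"
  shows "norm (stark g h m x) \<le> Gk \<theta> (g/h) (\<lambda>i. m i - x i)"
proof -
  have "norm (stark g h m x) = (\<Prod>i\<in>UNIV. \<bar>besselJ (m i - x i) (g / h)\<bar>)"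
    unfolding stark_def norm_of_real by (rule abs_prod)
  also have "\<dots> \<le> (\<Prod>i\<in>UNIV. gk \<theta> (g/h) (m i - x i))"
  proof (intro prod_mono conjI)
    fix i
    show "\<bar>besselJ (m i - x i) (g / h)\<bar> \<le> gk \<theta> (g/h) (m i - x i)"
      using besselJ_bound[of "m i - x i" "g/h"] gk_mono[OF order_refl assms, of "g/h" "m i - x i"]
      by (simp add: gk_def)
  qed simp
  finally show ?thesis unfolding Gk_def .
qed

lemma coeff_bound:
  assumes "0 \<le> \<theta>"
  shows "ennreal (norm (stark_coeff g h m f))
     \<le> (\<integral>\<^sup>+y. ennreal (Gk \<theta> (g/h) (\<lambda>i. m i - y i)) * ennreal (norm (f y)) \<partial>count_space UNIV)"
proof -
  have "ennreal (norm (stark_coeff g h m f))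
      \<le> (\<integral>\<^sup>+y. ennreal (norm (cnj (stark g h m y) * f y)) \<partial>count_space UNIV)"
    unfolding stark_coeff_def by (rule norm_infsum_ennreal)
  also have "\<dots> \<le> (\<integral>\<^sup>+y. ennreal (Gk \<theta> (g/h) (\<lambda>i. m i - y i)) * ennreal (norm (f y)) \<partial>count_space UNIV)"
  proof (intro nn_integral_mono)
    fix y
    have "norm (cnj (stark g h m y) * f y) \<le> Gk \<theta> (g/h) (\<lambda>i. m i - y i) * norm (f y)"
      by (simp add: norm_mult mult_right_mono stark_bound[OF assms])
    then show "ennreal (norm (cnj (stark g h m y) * f y)) \<le> ennreal (Gk \<theta> (g/h) (\<lambda>i. m i - y i)) * ennreal (norm (f y))"
      by (simp add: ennreal_mult[symmetric] Gk_nonneg ennreal_leI)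
  qed
  finally show ?thesis .
qed

lemma Pa_bound:
  assumes "0 \<le> \<theta>"
  shows "ennreal (norm (Pa g h a f x))
     \<le> (\<integral>\<^sup>+m. indicator {m. msum m = a} m * (ennreal (norm (stark_coeff g h m f)) * ennreal (Gk \<theta> (g/h) (\<lambda>i. m i - x i))) \<partial>count_space UNIV)"
proof -
  have "ennreal (norm (Pa g h a f x))
      \<le> (\<integral>\<^sup>+m. ennreal (norm (stark_coeff g h m f * stark g h m x)) \<partial>count_space {m. msum m = a})"
    unfolding Pa_def by (rule norm_infsum_ennreal)
  also have "\<dots> = (\<integral>\<^sup>+m. ennreal (norm (stark_coeff g h m f * stark g h m x)) * indicator {m. msum m = a} m \<partial>count_space UNIV)"
    by (rule nn_integral_count_space_indicator) (simp add: NO_MATCH_def)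
  also have "\<dots> \<le> (\<integral>\<^sup>+m. indicator {m. msum m = a} m * (ennreal (norm (stark_coeff g h m f)) * ennreal (Gk \<theta> (g/h) (\<lambda>i. m i - x i))) \<partial>count_space UNIV)"
  proof (intro nn_integral_mono)
    fix m
    have "norm (stark_coeff g h m f * stark g h m x) \<le> norm (stark_coeff g h m f) * Gk \<theta> (g/h) (\<lambda>i. m i - x i)"
      by (simp add: norm_mult mult_left_mono stark_bound[OF assms])
    hence "ennreal (norm (stark_coeff g h m f * stark g h m x)) \<le> ennreal (norm (stark_coeff g h m f)) * ennreal (Gk \<theta> (g/h) (\<lambda>i. m i - x i))"
      by (simp add: ennreal_mult[symmetric] Gk_nonneg ennreal_leI)
    then show "ennreal (norm (stark_coeff g h m f * stark g h m x)) * indicator {m. msum m = a} m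
       \<le> indicator {m. msum m = a} m * (ennreal (norm (stark_coeff g h m f)) * ennreal (Gk \<theta> (g/h) (\<lambda>i. m i - x i)))"
      by (simp add: indicator_def)
  qed
  finally show ?thesis .
qed

lemma Wop_bound:
  assumes "0 \<le> \<theta>"
  shows "ennreal (norm (Wop g h w f x))
     \<le> (\<integral>\<^sup>+m. ennreal \<bar>w (msum m)\<bar> * (ennreal (norm (stark_coeff g h m f)) * ennreal (Gk \<theta> (g/h) (\<lambda>i. m i - x i))) \<partial>count_space UNIV)"
proof -
  define T where "T m = ennreal (norm (stark_coeff g h m f)) * ennreal (Gk \<theta> (g/h) (\<lambda>i. m i - x i))" for m
  have "ennreal (norm (Wop g h w f x))
      \<le> (\<integral>\<^sup>+a. ennreal (norm (complex_of_real (w a) * Pa g h a f x)) \<partial>count_space UNIV)"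
    unfolding Wop_def by (rule norm_infsum_ennreal)
  also have "\<dots> \<le> (\<integral>\<^sup>+a. ennreal \<bar>w a\<bar> * (\<integral>\<^sup>+m. indicator {m. msum m = a} m * T m \<partial>count_space UNIV) \<partial>count_space UNIV)"
  proof (intro nn_integral_mono)
    fix a
    have "ennreal (norm (complex_of_real (w a) * Pa g h a f x)) = ennreal \<bar>w a\<bar> * ennreal (norm (Pa g h a f x))"
      by (simp add: norm_mult ennreal_mult)
    also have "\<dots> \<le> ennreal \<bar>w a\<bar> * (\<integral>\<^sup>+m. indicator {m. msum m = a} m * T m \<partial>count_space UNIV)"
      unfolding T_def by (intro mult_left_mono Pa_bound[OF assms]) auto
    finally show "ennreal (norm (complex_of_real (w a) * Pa g h a f x)) \<le> ennreal \<bar>w a\<bar> * (\<integral>\<^sup>+m. indicator {m. msum m = a} m * T m \<partial>count_space UNIV)" .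
  qed
  also have "\<dots> = (\<integral>\<^sup>+a. \<integral>\<^sup>+m. ennreal \<bar>w a\<bar> * (indicator {m. msum m = a} m * T m) \<partial>count_space UNIV \<partial>count_space UNIV)"
    by (simp add: nn_integral_cmult)
  also have "\<dots> = (\<integral>\<^sup>+m. \<integral>\<^sup>+a. ennreal \<bar>w a\<bar> * (indicator {m. msum m = a} m * T m) \<partial>count_space UNIV \<partial>count_space UNIV)"
    by (rule nn_swap)
  also have "\<dots> = (\<integral>\<^sup>+m. ennreal \<bar>w (msum m)\<bar> * T m \<partial>count_space UNIV)"
  proof (intro nn_integral_cong)
    fix m :: "'a \<Rightarrow> int"
    have "(\<integral>\<^sup>+a. ennreal \<bar>w a\<bar> * (indicator {m. msum m = a} m * T m) \<partial>count_space UNIV)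
        = (\<Sum>a\<in>{msum m}. ennreal \<bar>w a\<bar> * (indicator {m. msum m = a} m * T m))"
      by (rule nn_integral_count_space') (auto simp: indicator_def)
    then show "(\<integral>\<^sup>+a. ennreal \<bar>w a\<bar> * (indicator {m. msum m = a} m * T m) \<partial>count_space UNIV) = ennreal \<bar>w (msum m)\<bar> * T m"
      by simp
  qed
  finally show ?thesis unfolding T_def .
qed

lemma weight_shift:
  assumes "0 \<le> \<theta>"
  shows "exp (- \<theta> * \<bar>real_of_int (msum y) - lam\<bar>) * exp (\<theta> * \<bar>real_of_int (msum m) - lam\<bar>) * Gk \<theta> z (\<lambda>i. m i - y i)
        \<le> Gk (2*\<theta>) z (\<lambda>i. m i - y i)"
    and "exp (- \<theta> * \<bar>real_of_int (msum m) - lam\<bar>) * exp (\<theta> * \<bar>real_of_int (msum y) - lam\<bar>) * Gk \<theta> z (\<lambda>i. m i - y i)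
        \<le> Gk (2*\<theta>) z (\<lambda>i. (m::'n::finite \<Rightarrow> int) i - y i)"
proof -
  define D where "D = (\<Sum>i\<in>UNIV. \<bar>real_of_int (m i - y i)\<bar>)"
  have G2: "Gk (2*\<theta>) z (\<lambda>i. m i - y i) = exp (\<theta> * D) * Gk \<theta> z (\<lambda>i. m i - y i)"
  proof -
    have "Gk (2*\<theta>) z (\<lambda>i. m i - y i) = (\<Prod>i\<in>UNIV. exp (\<theta> * \<bar>real_of_int (m i - y i)\<bar>) * gk \<theta> z (m i - y i))"
      unfolding Gk_def gk_def by (intro prod.cong) (auto simp: exp_add[symmetric] algebra_simps)
    also have "\<dots> = exp (\<theta> * D) * Gk \<theta> z (\<lambda>i. m i - y i)"
      unfolding Gk_def D_def by (simp add: prod.distrib exp_sum sum_distrib_left)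
    finally show ?thesis .
  qed
  have dd: "\<bar>real_of_int (msum m) - real_of_int (msum y)\<bar> \<le> D"
  proof -
    have "real_of_int (msum m) - real_of_int (msum y) = (\<Sum>i\<in>UNIV. real_of_int (m i - y i))"
      unfolding msum_def by (simp add: sum_subtractf)
    then show ?thesis unfolding D_def by (metis sum_abs)
  qed
  have e1: "exp (- \<theta> * \<bar>real_of_int (msum y) - lam\<bar>) * exp (\<theta> * \<bar>real_of_int (msum m) - lam\<bar>) \<le> exp (\<theta> * D)"
  proof -
    have "\<theta> * \<bar>real_of_int (msum m) - lam\<bar> - \<theta> * \<bar>real_of_int (msum y) - lam\<bar> \<le> \<theta> * D"
      using dd assms by (smt (verit) mult_left_mono right_diff_distrib)
    then show ?thesis by (simp add: exp_add[symmetric])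
  qed
  have e2: "exp (- \<theta> * \<bar>real_of_int (msum m) - lam\<bar>) * exp (\<theta> * \<bar>real_of_int (msum y) - lam\<bar>) \<le> exp (\<theta> * D)"
  proof -
    have "\<theta> * \<bar>real_of_int (msum y) - lam\<bar> - \<theta> * \<bar>real_of_int (msum m) - lam\<bar> \<le> \<theta> * D"
      using dd assms by (smt (verit) mult_left_mono right_diff_distrib)
    then show ?thesis by (simp add: exp_add[symmetric])
  qed
  show "exp (- \<theta> * \<bar>real_of_int (msum y) - lam\<bar>) * exp (\<theta> * \<bar>real_of_int (msum m) - lam\<bar>) * Gk \<theta> z (\<lambda>i. m i - y i)
        \<le> Gk (2*\<theta>) z (\<lambda>i. m i - y i)"
    unfolding G2 by (intro mult_right_mono e1 Gk_nonneg)
  show "exp (- \<theta> * \<bar>real_of_int (msum m) - lam\<bar>) * exp (\<theta> * \<bar>real_of_int (msum y) - lam\<bar>) * Gk \<theta> z (\<lambda>i. m i - y i)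
        \<le> Gk (2*\<theta>) z (\<lambda>i. m i - y i)"
    unfolding G2 by (intro mult_right_mono e2 Gk_nonneg)
qed



lemma Pot_bound:
  assumes "\<And>n. \<bar>v n\<bar> \<le> Mv"
  shows "\<bar>Pot v (x::'n::{finite,linorder} \<Rightarrow> int)\<bar> \<le> real (card {(i::'n, j). i < j}) * Mv"
proof -
  have "\<bar>Pot v x\<bar> \<le> (\<Sum>(i, j)\<in>{(i::'n, j). i < j}. \<bar>v (x i - x j)\<bar>)"
    unfolding Pot_def by (rule order_trans[OF sum_abs]) (simp add: case_prod_unfold)
  also have "\<dots> \<le> real (card {(i::'n, j). i < j}) * Mv"
    using sum_bounded_above[of "{(i::'n, j). i < j}" "\<lambda>(i,j). \<bar>v (x i - x j)\<bar>" Mv] assms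
    by (auto simp: case_prod_unfold)
  finally show ?thesis .
qed

lemma ennreal_sq: "0 \<le> r \<Longrightarrow> (ennreal r)^2 = ennreal (r^2)"
  by (simp add: ennreal_power)

lemma main_bound:
  fixes g h \<theta> lam M :: real and v :: "int \<Rightarrow> real"
    and F :: "('n::{finite,linorder} \<Rightarrow> int) set" and c :: "('n \<Rightarrow> int) \<Rightarrow> complex"
  assumes th: "\<theta> \<ge> 0" and Mb: "\<And>x. \<bar>Pot v (x::'n \<Rightarrow> int)\<bar> \<le> M" and M0: "M \<ge> 0"
    and fin: "finite F"
  defines "K \<equiv> Cth (2*\<theta>) (g/h) ^ CARD('n)"
  defines "\<psi> \<equiv> (\<lambda>x. \<Sum>m\<in>F. c m * stark g h m x)"
  defines "W\<psi> \<equiv> Wop g h (\<lambda>a. exp (\<theta> * \<bar>real_of_int a - lam\<bar>)) \<psi>"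
  defines "\<phi> \<equiv> Wop g h (\<lambda>a. exp (- \<theta> * \<bar>real_of_int a - lam\<bar>)) (\<lambda>x. complex_of_real (Pot v x) * W\<psi> x)"
  shows "l2 \<phi> \<and> l2norm \<phi> \<le> (M * K^4) * l2norm \<psi>"
proof -
  define z where "z = g/h"
  define wp where "wp a = exp (\<theta> * \<bar>real_of_int a - lam\<bar>)" for a :: int
  define wm where "wm a = exp (- \<theta> * \<bar>real_of_int a - lam\<bar>)" for a :: int
  define f where "f x = complex_of_real (Pot v x) * W\<psi> x" for x
  define E where "E d = ennreal (Gk (2*\<theta>) z d)" for d :: "'n \<Rightarrow> int"
  define L where "L u = (\<integral>\<^sup>+x. (u x)^2 \<partial>count_space UNIV)" for u :: "('n \<Rightarrow> int) \<Rightarrow> ennreal"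
  define u0 where "u0 y = ennreal (norm (\<psi> y))" for y
  define u1 where "u1 m = ennreal (norm (stark_coeff g h m \<psi>))" for m
  define u2 where "u2 y = ennreal (wm (msum y)) * ennreal (norm (W\<psi> y))" for y
  define u3 where "u3 m = ennreal (wm (msum m)) * ennreal (norm (stark_coeff g h m f))" for m
  define u4 where "u4 x = ennreal (norm (\<phi> x))" for x
  define c0 where "c0 m = ennreal (if m \<in> F then norm (c m) else 0)" for m
  have th2: "0 \<le> 2*\<theta>" using th by simp
  have K0: "K \<ge> 0" unfolding K_def Cth_def by (intro zero_le_power infsum_nonneg gk_nonneg)
  have sh1: "(\<integral>\<^sup>+y. E (\<lambda>i. m i - y i) \<partial>count_space UNIV) = ennreal K" for m
    unfolding E_def K_def z_def by (rule Gk_shift1)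
  have sh2: "(\<integral>\<^sup>+m. E (\<lambda>i. m i - y i) \<partial>count_space UNIV) = ennreal K" for y
    unfolding E_def K_def z_def by (rule Gk_shift2)
  have Wpsi: "W\<psi> = Wop g h wp \<psi>" unfolding W\<psi>_def wp_def by simp
  have phi: "\<phi> = Wop g h wm f" unfolding \<phi>_def wm_def f_def by simp

  have S0: "u0 y \<le> (\<integral>\<^sup>+m. E (\<lambda>i. m i - y i) * c0 m \<partial>count_space UNIV)" for y
  proof -
    have "norm (\<psi> y) \<le> (\<Sum>m\<in>F. norm (c m) * Gk (2*\<theta>) z (\<lambda>i. m i - y i))"
      unfolding \<psi>_def
      by (rule order_trans[OF norm_sum], rule sum_mono)
         (simp add: norm_mult mult_left_mono stark_bound[OF th2] z_def)
    hence "u0 y \<le> ennreal (\<Sum>m\<in>F. norm (c m) * Gk (2*\<theta>) z (\<lambda>i. m i - y i))"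
      unfolding u0_def by (rule ennreal_leI)
    also have "\<dots> = (\<Sum>m\<in>F. E (\<lambda>i. m i - y i) * c0 m)"
      unfolding E_def c0_def
      by (subst sum_ennreal[symmetric]) (auto intro!: sum.cong simp: Gk_nonneg ennreal_mult mult.commute)
    also have "\<dots> = (\<integral>\<^sup>+m. E (\<lambda>i. m i - y i) * c0 m \<partial>count_space UNIV)"
      by (rule nn_integral_count_space'[symmetric]) (use fin in \<open>auto simp: c0_def\<close>)
    finally show ?thesis .
  qed
  have L0: "L u0 \<le> ennreal K * ennreal K * L c0"
    unfolding L_def
    by (rule schur[where k="\<lambda>y m. E (\<lambda>i. m i - y i)"]) (use S0 sh1 sh2 in auto)

  have S1: "u1 m \<le> (\<integral>\<^sup>+y. E (\<lambda>i. m i - y i) * u0 y \<partial>count_space UNIV)" for m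
    unfolding u1_def u0_def E_def z_def by (rule coeff_bound[OF th2])
  have L1: "L u1 \<le> ennreal K * ennreal K * L u0"
    unfolding L_def
    by (rule schur[where k="\<lambda>m y. E (\<lambda>i. m i - y i)"]) (use S1 sh1 sh2 in auto)

  have S2: "u2 y \<le> (\<integral>\<^sup>+m. E (\<lambda>i. m i - y i) * u1 m \<partial>count_space UNIV)" for y
  proof -
    have "u2 y \<le> ennreal (wm (msum y)) *
        (\<integral>\<^sup>+m. ennreal \<bar>wp (msum m)\<bar> * (u1 m * ennreal (Gk \<theta> z (\<lambda>i. m i - y i))) \<partial>count_space UNIV)"
      unfolding u2_def u1_def Wpsi z_def by (intro mult_left_mono Wop_bound[OF th]) auto
    also have "\<dots> = (\<integral>\<^sup>+m. ennreal (wm (msum y)) * (ennreal \<bar>wp (msum m)\<bar> * (u1 m * ennreal (Gk \<theta> z (\<lambda>i. m i - y i)))) \<partial>count_space UNIV)"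
      by (simp add: nn_integral_cmult)
    also have "\<dots> \<le> (\<integral>\<^sup>+m. E (\<lambda>i. m i - y i) * u1 m \<partial>count_space UNIV)"
    proof (intro nn_integral_mono)
      fix m :: "'n \<Rightarrow> int"
      have "wm (msum y) * \<bar>wp (msum m)\<bar> * Gk \<theta> z (\<lambda>i. m i - y i) \<le> Gk (2*\<theta>) z (\<lambda>i. m i - y i)"
        using weight_shift(1)[OF th, of y lam m z] unfolding wm_def wp_def by simp
      hence "ennreal (wm (msum y) * \<bar>wp (msum m)\<bar> * Gk \<theta> z (\<lambda>i. m i - y i)) \<le> E (\<lambda>i. m i - y i)"
        unfolding E_def by (rule ennreal_leI)
      hence "ennreal (wm (msum y)) * ennreal \<bar>wp (msum m)\<bar> * ennreal (Gk \<theta> z (\<lambda>i. m i - y i)) \<le> E (\<lambda>i. m i - y i)"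
        by (simp add: ennreal_mult[symmetric] wm_def Gk_nonneg)
      hence "ennreal (wm (msum y)) * ennreal \<bar>wp (msum m)\<bar> * ennreal (Gk \<theta> z (\<lambda>i. m i - y i)) * u1 m \<le> E (\<lambda>i. m i - y i) * u1 m"
        by (rule mult_right_mono) simp
      then show "ennreal (wm (msum y)) * (ennreal \<bar>wp (msum m)\<bar> * (u1 m * ennreal (Gk \<theta> z (\<lambda>i. m i - y i)))) \<le> E (\<lambda>i. m i - y i) * u1 m"
        by (simp add: mult_ac)
    qed
    finally show ?thesis .
  qed
  have L2: "L u2 \<le> ennreal K * ennreal K * L u1"
    unfolding L_def
    by (rule schur[where k="\<lambda>y m. E (\<lambda>i. m i - y i)"]) (use S2 sh1 sh2 in auto)

  have S3: "u3 m \<le> (\<integral>\<^sup>+y. (ennreal M * E (\<lambda>i. m i - y i)) * u2 y \<partial>count_space UNIV)" for m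
  proof -
    have "u3 m \<le> ennreal (wm (msum m)) *
        (\<integral>\<^sup>+y. ennreal (Gk \<theta> z (\<lambda>i. m i - y i)) * ennreal (norm (f y)) \<partial>count_space UNIV)"
      unfolding u3_def z_def by (intro mult_left_mono coeff_bound[OF th]) auto
    also have "\<dots> = (\<integral>\<^sup>+y. ennreal (wm (msum m)) * (ennreal (Gk \<theta> z (\<lambda>i. m i - y i)) * ennreal (norm (f y))) \<partial>count_space UNIV)"
      by (simp add: nn_integral_cmult)
    also have "\<dots> \<le> (\<integral>\<^sup>+y. (ennreal M * E (\<lambda>i. m i - y i)) * u2 y \<partial>count_space UNIV)"
    proof (intro nn_integral_mono)
      fix y :: "'n \<Rightarrow> int"
      have w1: "wp (msum y) * wm (msum y) = 1"
        unfolding wp_def wm_def by (simp add: exp_add[symmetric])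
      have ws: "wm (msum m) * wp (msum y) * Gk \<theta> z (\<lambda>i. m i - y i) \<le> Gk (2*\<theta>) z (\<lambda>i. m i - y i)"
        using weight_shift(2)[OF th, of m lam y z] unfolding wm_def wp_def by simp
      have nf: "norm (f y) \<le> M * norm (W\<psi> y)"
        unfolding f_def by (simp add: norm_mult mult_right_mono Mb)
      have "wm (msum m) * Gk \<theta> z (\<lambda>i. m i - y i) * norm (f y)
          \<le> wm (msum m) * Gk \<theta> z (\<lambda>i. m i - y i) * (M * norm (W\<psi> y))"
        by (intro mult_left_mono nf) (auto simp: wm_def Gk_nonneg)
      also have "\<dots> = (wm (msum m) * wp (msum y) * Gk \<theta> z (\<lambda>i. m i - y i)) * (M * (wm (msum y) * norm (W\<psi> y)))"
      proof -
        have "(wm (msum m) * wp (msum y) * Gk \<theta> z (\<lambda>i. m i - y i)) * (M * (wm (msum y) * norm (W\<psi> y)))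
            = wm (msum m) * Gk \<theta> z (\<lambda>i. m i - y i) * (M * norm (W\<psi> y)) * (wp (msum y) * wm (msum y))"
          by (simp only: mult_ac)
        then show ?thesis using w1 by simp
      qed
      also have "\<dots> \<le> Gk (2*\<theta>) z (\<lambda>i. m i - y i) * (M * (wm (msum y) * norm (W\<psi> y)))"
        by (intro mult_right_mono ws) (auto simp: M0 wm_def)
      finally have "ennreal (wm (msum m) * Gk \<theta> z (\<lambda>i. m i - y i) * norm (f y))
          \<le> ennreal (Gk (2*\<theta>) z (\<lambda>i. m i - y i) * (M * (wm (msum y) * norm (W\<psi> y))))"
        by (rule ennreal_leI)
      then show "ennreal (wm (msum m)) * (ennreal (Gk \<theta> z (\<lambda>i. m i - y i)) * ennreal (norm (f y)))
          \<le> (ennreal M * E (\<lambda>i. m i - y i)) * u2 y"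
        unfolding E_def u2_def
        by (simp add: ennreal_mult[symmetric] wm_def Gk_nonneg M0 mult_ac)
    qed
    finally show ?thesis .
  qed
  have L3: "L u3 \<le> (ennreal M * ennreal K) * (ennreal M * ennreal K) * L u2"
    unfolding L_def
    by (rule schur[where k="\<lambda>m y. ennreal M * E (\<lambda>i. m i - y i)"])
       (use S3 sh1 sh2 in \<open>auto simp: nn_integral_cmult\<close>)

  have S4: "u4 x \<le> (\<integral>\<^sup>+m. E (\<lambda>i. m i - x i) * u3 m \<partial>count_space UNIV)" for x
  proof -
    have "u4 x \<le> (\<integral>\<^sup>+m. ennreal \<bar>wm (msum m)\<bar> * (ennreal (norm (stark_coeff g h m f)) * ennreal (Gk \<theta> z (\<lambda>i. m i - x i))) \<partial>count_space UNIV)"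
      unfolding u4_def phi z_def by (rule Wop_bound[OF th])
    also have "\<dots> \<le> (\<integral>\<^sup>+m. E (\<lambda>i. m i - x i) * u3 m \<partial>count_space UNIV)"
    proof (intro nn_integral_mono)
      fix m :: "'n \<Rightarrow> int"
      have "ennreal (Gk \<theta> z (\<lambda>i. m i - x i)) \<le> E (\<lambda>i. m i - x i)"
        unfolding E_def by (intro ennreal_leI Gk_mono th) (use th in simp)
      hence "ennreal (Gk \<theta> z (\<lambda>i. m i - x i)) * u3 m \<le> E (\<lambda>i. m i - x i) * u3 m"
        by (rule mult_right_mono) simp
      moreover have "\<bar>wm (msum m)\<bar> = wm (msum m)" unfolding wm_def by simp
      ultimately show "ennreal \<bar>wm (msum m)\<bar> * (ennreal (norm (stark_coeff g h m f)) * ennreal (Gk \<theta> z (\<lambda>i. m i - x i))) \<le> E (\<lambda>i. m i - x i) * u3 m"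
        unfolding u3_def by (simp add: mult_ac)
    qed
    finally show ?thesis .
  qed
  have L4: "L u4 \<le> ennreal K * ennreal K * L u3"
    unfolding L_def
    by (rule schur[where k="\<lambda>x m. E (\<lambda>i. m i - x i)"]) (use S4 sh1 sh2 in auto)

  define Q where "Q = (M * K^4)^2"
  have Q0: "Q \<ge> 0" unfolding Q_def by simp
  have LQ: "L u4 \<le> ennreal Q * L u0"
  proof -
    have "L u4 \<le> ennreal K * ennreal K * L u3" by (rule L4)
    also have "\<dots> \<le> ennreal K * ennreal K * ((ennreal M * ennreal K) * (ennreal M * ennreal K) * L u2)"
      by (rule mult_left_mono[OF L3]) simp
    also have "\<dots> \<le> ennreal K * ennreal K * ((ennreal M * ennreal K) * (ennreal M * ennreal K) * (ennreal K * ennreal K * L u1))"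
      by (rule mult_left_mono[OF mult_left_mono[OF L2]]) simp_all
    also have "\<dots> \<le> ennreal K * ennreal K * ((ennreal M * ennreal K) * (ennreal M * ennreal K) * (ennreal K * ennreal K * (ennreal K * ennreal K * L u0)))"
      by (rule mult_left_mono[OF mult_left_mono[OF mult_left_mono[OF L1]]]) simp_all
    also have "\<dots> = ennreal Q * L u0"
    proof -
      have e: "K * K * ((M * K) * (M * K) * (K * K * (K * K))) = Q"
        unfolding Q_def by (simp add: power2_eq_square power4_eq_xxxx mult_ac)
      have "ennreal K * ennreal K * ((ennreal M * ennreal K) * (ennreal M * ennreal K) * (ennreal K * ennreal K * (ennreal K * ennreal K * L u0)))
          = ennreal (K * K * ((M * K) * (M * K) * (K * K * (K * K)))) * L u0"
        using K0 M0 by (simp only: ennreal_mult mult_nonneg_nonneg mult.assoc)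
      then show ?thesis unfolding e .
    qed
    finally show ?thesis .
  qed
  have Lc0: "L c0 \<noteq> \<infinity>"
  proof -
    have "L c0 = (\<Sum>m\<in>F. (c0 m)^2)"
      unfolding L_def by (rule nn_integral_count_space') (use fin in \<open>auto simp: c0_def\<close>)
    then show ?thesis by (simp add: c0_def ennreal_power sum_ennreal)
  qed
  have Lu0: "L u0 \<noteq> \<infinity>"
  proof -
    have "L u0 \<le> ennreal (K*K) * L c0" using L0 by (simp add: ennreal_mult K0)
    also have "\<dots> < \<infinity>" using Lc0 by (simp add: ennreal_mult_less_top top.not_eq_extremum)
    finally show ?thesis by simp
  qed
  have Lu4: "L u4 \<noteq> \<infinity>"
  proof -
    have "L u4 \<le> ennreal Q * L u0" by (rule LQ)
    also have "\<dots> < \<infinity>" using Lu0 by (simp add: ennreal_mult_less_top top.not_eq_extremum)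
    finally show ?thesis by simp
  qed
  have eq0: "L u0 = (\<integral>\<^sup>+x. ennreal ((cmod (\<psi> x))^2) \<partial>count_space UNIV)"
    unfolding L_def u0_def by (simp add: ennreal_sq)
  have eq4: "L u4 = (\<integral>\<^sup>+x. ennreal ((cmod (\<phi> x))^2) \<partial>count_space UNIV)"
    unfolding L_def u4_def by (simp add: ennreal_sq)
  have R0: "(\<lambda>x. (cmod (\<psi> x))^2) summable_on UNIV \<and> ennreal (\<Sum>\<^sub>\<infinity>x. (cmod (\<psi> x))^2) = L u0"
    unfolding eq0 by (rule nn_finite_summable) (use Lu0 eq0 in auto)
  have R4: "(\<lambda>x. (cmod (\<phi> x))^2) summable_on UNIV \<and> ennreal (\<Sum>\<^sub>\<infinity>x. (cmod (\<phi> x))^2) = L u4"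
    unfolding eq4 by (rule nn_finite_summable) (use Lu4 eq4 in auto)
  define S\<psi> where "S\<psi> = (\<Sum>\<^sub>\<infinity>x. (cmod (\<psi> x))^2)"
  define S\<phi> where "S\<phi> = (\<Sum>\<^sub>\<infinity>x. (cmod (\<phi> x))^2)"
  have Sp0: "S\<psi> \<ge> 0" unfolding S\<psi>_def by (intro infsum_nonneg) simp
  have eP: "ennreal S\<phi> = L u4" using R4 unfolding S\<phi>_def by simp
  have eS: "ennreal S\<psi> = L u0" using R0 unfolding S\<psi>_def by simp
  have "ennreal S\<phi> \<le> ennreal (Q * S\<psi>)"
    unfolding eP ennreal_mult[OF Q0 Sp0] eS by (rule LQ)
  hence SS: "S\<phi> \<le> Q * S\<psi>" using Q0 Sp0 by (simp add: ennreal_le_iff)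
  have "l2norm \<phi> = sqrt S\<phi>" unfolding l2norm_def S\<phi>_def by simp
  also have "\<dots> \<le> sqrt (Q * S\<psi>)" using SS by simp
  also have "\<dots> = (M * K^4) * l2norm \<psi>"
    unfolding Q_def l2norm_def S\<psi>_def using M0 K0 by (simp add: real_sqrt_mult)
  finally have "l2norm \<phi> \<le> (M * K^4) * l2norm \<psi>" .
  moreover have "l2 \<phi>" unfolding l2_def using R4 by simp
  ultimately show ?thesis by simp
qed


theorem mainTheorem8:
  fixes g h \<theta> :: real and v :: "int \<Rightarrow> real"
  assumes "h \<noteq> 0" and "\<theta> \<ge> 0"
    and "bounded (range v)" and "(v \<longlongrightarrow> 0) at_top" and "(v \<longlongrightarrow> 0) at_bot"
  shows "\<exists>C::real. \<forall>(lam::real) (F :: ('n::{finite,linorder} \<Rightarrow> int) set) (c :: ('n \<Rightarrow> int) \<Rightarrow> complex).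
           finite F \<longrightarrow>
           (let \<psi> = (\<lambda>x. \<Sum>m\<in>F. c m * stark g h m x);
                W\<psi> = Wop g h (\<lambda>a. exp (\<theta> * \<bar>real_of_int a - lam\<bar>)) \<psi>;
                \<phi> = Wop g h (\<lambda>a. exp (- \<theta> * \<bar>real_of_int a - lam\<bar>))
                       (\<lambda>x. complex_of_real (Pot v x) * W\<psi> x)
            in l2 \<phi> \<and> l2norm \<phi> \<le> C * l2norm \<psi>)"
proof -
  obtain a where a: "\<And>n. \<bar>v n\<bar> \<le> a"
    using assms(3) unfolding bounded_iff by auto
  have a0: "a \<ge> 0" using a[of 0] by simp
  define M where "M = real (card {(i::'n, j). i < j}) * a"
  have M0: "M \<ge> 0" unfolding M_def using a0 by simp
  have Mb: "\<And>x. \<bar>Pot v (x::'n \<Rightarrow> int)\<bar> \<le> M"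
    unfolding M_def by (rule Pot_bound) (rule a)
  show ?thesis
  proof (intro exI allI impI)
    fix lam :: real and F :: "('n \<Rightarrow> int) set" and c :: "('n \<Rightarrow> int) \<Rightarrow> complex"
    assume "finite F"
    then show "let \<psi> = (\<lambda>x. \<Sum>m\<in>F. c m * stark g h m x);
                W\<psi> = Wop g h (\<lambda>a. exp (\<theta> * \<bar>real_of_int a - lam\<bar>)) \<psi>;
                \<phi> = Wop g h (\<lambda>a. exp (- \<theta> * \<bar>real_of_int a - lam\<bar>))
                       (\<lambda>x. complex_of_real (Pot v x) * W\<psi> x)
            in l2 \<phi> \<and> l2norm \<phi> \<le> (M * (Cth (2*\<theta>) (g/h) ^ CARD('n))^4) * l2norm \<psi>"
      unfolding Let_def using main_bound[OF assms(2) Mb M0 \<open>finite F\<close>, where lam=lam and c=c and g=g and h=h] by simp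
  qed
qed

end
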